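(* Let $n,m\ge 1$ and let $\mathfrak{g}$ be of type $B_n$ ($\mathfrak{so}_{2n+1}$). The multiplicity of the trivial representation $V(0)$ in $V(\omega_n)^{\otimes 2m}$ (equivalently, the number of connected components of the crystal $B(\omega_n)^{\otimes 2m}$ isomorphic to $B(0)$) equals the determinant of the $n\times n$ Hankel matrix \[ \left[\operatorname{Cat}_{2n-i-j+m}\right]_{i,j=1}^{n}. \]
   Context: $V(\omega_n)$ is the spin representation of $\mathfrak{so}_{2n+1}$ (of dimension $2^n$), the irreducible representation whose highest weight is the fundamental weight $\omega_n=\tfrac12(\epsilon_1+\cdots+\epsilon_n)$. $\operatorname{Cat}_k=\frac{1}{k+1}\binom{2k}{k}$ is the $k$-th Catalan number. *)

theory Defs
  imports "Jordan_Normal_Form.Determinant"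
begin

definition catalan :: "nat \<Rightarrow> nat" where
  "catalan k = ((2 * k) choose k) div (k + 1)"

text \<open>Elements of B(omega_n) are sign vectors (s_1,...,s_n), encoded as boolean
 lists of length n (True = +, False = -); position k-1 holds s_k.
 The weight is (1/2)(s_1 eps_1 + ... + s_n eps_n).
 Simple roots: alpha_i = eps_i - eps_(i+1) for 1 <= i < n, alpha_n = eps_n.\<close>

definition spin_elems :: "nat \<Rightarrow> bool list set" where
  "spin_elems n = {s. length s = n}"

definition spin_f :: "nat \<Rightarrow> nat \<Rightarrow> bool list \<Rightarrow> bool list option" where
  "spin_f n i s =
     (if 1 \<le> i \<and> i < n then
        (if s ! (i - 1) \<and> \<not> s ! i then Some (s[i - 1 := False, i := True]) else None)
      else if i = n \<and> 1 \<le> n then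
        (if s ! (n - 1) then Some (s[n - 1 := False]) else None)
      else None)"

definition spin_e :: "nat \<Rightarrow> nat \<Rightarrow> bool list \<Rightarrow> bool list option" where
  "spin_e n i s =
     (if 1 \<le> i \<and> i < n then
        (if \<not> s ! (i - 1) \<and> s ! i then Some (s[i - 1 := True, i := False]) else None)
      else if i = n \<and> 1 \<le> n then
        (if \<not> s ! (n - 1) then Some (s[n - 1 := True]) else None)
      else None)"

text \<open>phi_i / epsilon_i of the (minuscule) spin crystal: lengths of i-strings.\<close>
definition spin_phi :: "nat \<Rightarrow> nat \<Rightarrow> bool list \<Rightarrow> nat" where
  "spin_phi n i s = (if spin_f n i s = None then 0 else 1)"

definition spin_eps :: "nat \<Rightarrow> nat \<Rightarrow> bool list \<Rightarrow> nat" where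
  "spin_eps n i s = (if spin_e n i s = None then 0 else 1)"

text \<open>Twice the weight, as a coordinate vector w.r.t. eps_1..eps_n (index k = eps_(k+1)).\<close>
definition spin_wt2 :: "bool list \<Rightarrow> nat \<Rightarrow> int" where
  "spin_wt2 s k = (if s ! k then 1 else -1)"

text \<open>A list [b_1,...,b_N] represents b_1 \<otimes> (b_2 \<otimes> (... \<otimes> b_N)); the empty list is
 the unique element of the trivial crystal B(0).  For b1 \<otimes> b2:
   f_i(b1 \<otimes> b2) = f_i b1 \<otimes> b2 if phi_i(b1) > eps_i(b2), else b1 \<otimes> f_i b2;
   e_i(b1 \<otimes> b2) = e_i b1 \<otimes> b2 if phi_i(b1) \<ge> eps_i(b2), else b1 \<otimes> e_i b2;
   phi_i(b1 \<otimes> b2) = phi_i(b2) + max(0, phi_i(b1) - eps_i(b2));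
   eps_i(b1 \<otimes> b2) = eps_i(b1) + max(0, eps_i(b2) - phi_i(b1)).\<close>

fun tens_phi :: "nat \<Rightarrow> nat \<Rightarrow> bool list list \<Rightarrow> nat"
and tens_eps :: "nat \<Rightarrow> nat \<Rightarrow> bool list list \<Rightarrow> nat" where
  "tens_phi n i [] = 0"
| "tens_phi n i (b # bs) = tens_phi n i bs + (spin_phi n i b - tens_eps n i bs)"
| "tens_eps n i [] = 0"
| "tens_eps n i (b # bs) = spin_eps n i b + (tens_eps n i bs - spin_phi n i b)"

fun tens_f :: "nat \<Rightarrow> nat \<Rightarrow> bool list list \<Rightarrow> bool list list option" where
  "tens_f n i [] = None"
| "tens_f n i (b # bs) =
     (if spin_phi n i b > tens_eps n i bs
      then map_option (\<lambda>c. c # bs) (spin_f n i b)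
      else map_option (\<lambda>cs. b # cs) (tens_f n i bs))"

fun tens_e :: "nat \<Rightarrow> nat \<Rightarrow> bool list list \<Rightarrow> bool list list option" where
  "tens_e n i [] = None"
| "tens_e n i (b # bs) =
     (if spin_phi n i b \<ge> tens_eps n i bs
      then map_option (\<lambda>c. c # bs) (spin_e n i b)
      else map_option (\<lambda>cs. b # cs) (tens_e n i bs))"

definition tens_wt2 :: "bool list list \<Rightarrow> nat \<Rightarrow> int" where
  "tens_wt2 bs k = (\<Sum>b\<leftarrow>bs. spin_wt2 b k)"

definition tensor_power :: "nat \<Rightarrow> nat \<Rightarrow> bool list list set" where
  "tensor_power n N = {bs. length bs = N \<and> (\<forall>b\<in>set bs. b \<in> spin_elems n)}"

text \<open>A connected component isomorphic to B(0) is a single vertex of weight 0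
 with no incident i-arrows for any colour i.\<close>
definition trivial_components :: "nat \<Rightarrow> nat \<Rightarrow> bool list list set" where
  "trivial_components n N =
     {bs \<in> tensor_power n N.
        (\<forall>k<n. tens_wt2 bs k = 0) \<and>
        (\<forall>i\<in>{1..n}. tens_e n i bs = None \<and> tens_f n i bs = None)}"

definition hankel_cat :: "nat \<Rightarrow> nat \<Rightarrow> int mat" where
  "hankel_cat n m = mat n n (\<lambda>(i, j). int (catalan (2 * n + m - (i + 1) - (j + 1))))"

end

theory Submission
  imports Defs
begin

fun cnt :: "nat \<Rightarrow> int \<Rightarrow> int \<Rightarrow> nat" where
  "cnt 0 a b = (if a = b \<and> 0 \<le> a then 1 else 0)"
| "cnt (Suc t) a b = (if 0 \<le> a then cnt t (a+1) b + cnt t (a-1) b else 0)"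

lemma cnt_nz: "cnt t a b \<noteq> 0 \<Longrightarrow> even (int t + a + b) \<and> \<bar>b - a\<bar> \<le> int t \<and> 0 \<le> a \<and> 0 \<le> b"
proof (induction t arbitrary: a)
  case 0 then show ?case by (auto split: if_splits)
next
  case (Suc t)
  show ?case
  proof (cases "cnt t (a+1) b \<noteq> 0")
    case True
    from Suc.IH[OF this] Suc.prems show ?thesis by (auto split: if_splits)
  next
    case False
    then have "cnt t (a-1) b \<noteq> 0" using Suc.prems by (auto split: if_splits)
    from Suc.IH[OF this] Suc.prems show ?thesis by (auto split: if_splits)
  qed
qed

lemma cnt_up: "0 \<le> a \<Longrightarrow> cnt t a (a + int t) = 1"
proof (induction t arbitrary: a)
  case 0 then show ?case by simp
next
  case (Suc t)
  have "cnt t (a - 1) (a + int (Suc t)) = 0" using cnt_nz[of t "a-1" "a + int (Suc t)"] by auto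
  moreover have "cnt t (a + 1) (a + int (Suc t)) = 1" using Suc.IH[of "a+1"] Suc.prems by (simp add: algebra_simps)
  ultimately show ?case using Suc.prems by simp
qed

lemma cnt_down: "0 \<le> b \<Longrightarrow> cnt t (b + int t) b = 1"
proof (induction t arbitrary: b)
  case 0 then show ?case by simp
next
  case (Suc t)
  have "cnt t (b + int (Suc t) + 1) b = 0" using cnt_nz[of t "b + int (Suc t) + 1" b] by auto
  moreover have "cnt t (b + int (Suc t) - 1) b = 1" using Suc.IH[of b] Suc.prems by (simp add: algebra_simps)
  ultimately show ?case using Suc.prems by simp
qed

lemma cnt_neg: "a < 0 \<Longrightarrow> cnt t a b = 0"
  using cnt_nz[of t a b] by linarith

lemma cnt_CK: "a + int s \<le> M \<Longrightarrow> cnt (s + t) a b = (\<Sum>c\<in>{0..M}. cnt s a c * cnt t c b)"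
proof (induction s arbitrary: a)
  case 0
  show ?case
  proof (cases "0 \<le> a")
    case True
    have "(\<Sum>c\<in>{0..M}. cnt 0 a c * cnt t c b) = (\<Sum>c\<in>{0..M}. if a = c then cnt t a b else 0)"
      by (rule sum.cong) (use True in auto)
    also have "\<dots> = cnt t a b" using True 0 by (simp add: sum.delta')
    finally show ?thesis by simp
  next
    case False
    then show ?thesis by (simp add: cnt_neg)
  qed
next
  case (Suc s)
  show ?case
  proof (cases "0 \<le> a")
    case True
    have "cnt (Suc s + t) a b = cnt (s + t) (a+1) b + cnt (s+t) (a-1) b" using True by simp
    also have "\<dots> = (\<Sum>c\<in>{0..M}. cnt s (a+1) c * cnt t c b) + (\<Sum>c\<in>{0..M}. cnt s (a-1) c * cnt t c b)"
      using Suc.IH[of "a+1"] Suc.IH[of "a-1"] Suc.prems by simp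
    also have "\<dots> = (\<Sum>c\<in>{0..M}. cnt s (a+1) c * cnt t c b + cnt s (a-1) c * cnt t c b)"
      by (rule sum.distrib[symmetric])
    also have "\<dots> = (\<Sum>c\<in>{0..M}. cnt (Suc s) a c * cnt t c b)"
      by (rule sum.cong) (use True in \<open>auto simp: add_mult_distrib\<close>)
    finally show ?thesis .
  next
    case False
    then show ?thesis by (simp add: cnt_neg)
  qed
qed

definition Q :: "nat \<Rightarrow> int \<Rightarrow> int" where
  "Q t u = (if 0 \<le> u then int (t choose nat u) else 0)"

lemma Q_neg: "u < 0 \<Longrightarrow> Q t u = 0" unfolding Q_def by simp
lemma Q_nat: "Q t (int k) = int (t choose k)" unfolding Q_def by simp

lemma Q_pascal: "Q (Suc t) u = Q t (u - 1) + Q t u"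
proof -
  consider "u < 0" | "u = 0" | "u \<ge> 1" by linarith
  then show ?thesis
  proof cases
    case 1 then show ?thesis by (simp add: Q_neg)
  next
    case 2
    have "Q (Suc t) 0 = 1" using Q_nat[of "Suc t" 0] by simp
    moreover have "Q t 0 = 1" using Q_nat[of t 0] by simp
    moreover have "Q t (-1) = 0" by (simp add: Q_neg)
    ultimately show ?thesis using 2 by simp
  next
    case 3
    define k where "k = nat (u - 1)"
    have k: "u = int (Suc k)" unfolding k_def using 3 by simp
    have k2: "u - 1 = int k" unfolding k_def using 3 by simp
    show ?thesis unfolding k2 unfolding k Q_nat by simp
  qed
qed

definition P :: "nat \<Rightarrow> int \<Rightarrow> int" where
  "P t d = (if even (int t + d) then Q t ((int t + d) div 2) else 0)"

lemma P_pascal: "P (Suc t) d = P t (d - 1) + P t (d + 1)"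
proof (cases "even (int t + 1 + d)")
  case True
  define u where "u = (int (Suc t) + d) div 2"
  have e1: "even (int t + (d - 1))" "even (int t + (d+1))" using True by presburger+
  have d1: "(int t + (d - 1)) div 2 = u - 1" unfolding u_def using True by presburger
  have d2: "(int t + (d + 1)) div 2 = u" unfolding u_def by (simp add: algebra_simps)
  have "P (Suc t) d = Q (Suc t) u" unfolding P_def u_def using True by (simp add: algebra_simps)
  moreover have "P t (d-1) = Q t (u - 1)" unfolding P_def using e1 d1 by simp
  moreover have "P t (d+1) = Q t u" unfolding P_def using e1 d2 by simp
  ultimately show ?thesis using Q_pascal by simp
next
  case False
  have "odd (int (Suc t) + d)" "odd (int t + (d-1))" "odd (int t + (d+1))" using False by presburger+
  then show ?thesis unfolding P_def by simp
qed

lemma P_0: "P 0 d = (if d = 0 then 1 else 0)"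
proof (cases "d = 0")
  case True
  then show ?thesis unfolding P_def using Q_nat[of 0 0] by simp
next
  case False
  show ?thesis
  proof (cases "even d")
    case True
    have "d div 2 \<noteq> 0" using True False by auto
    then consider "d div 2 < 0" | "d div 2 \<ge> 1" by linarith
    then have "Q 0 (d div 2) = 0"
    proof cases
      case 1 then show ?thesis by (simp add: Q_neg)
    next
      case 2
      then have "d div 2 = int (Suc (nat (d div 2 - 1)))" by simp
      then show ?thesis using Q_nat[of 0 "Suc (nat (d div 2 - 1))"] by simp
    qed
    then show ?thesis unfolding P_def using True False by simp
  next
    case odd: False
    then show ?thesis unfolding P_def using False by simp
  qed
qed

lemma cnt_closed: "-1 \<le> a \<Longrightarrow> 0 \<le> b \<Longrightarrow> int (cnt t a b) = P t (b - a) - P t (b + a + 2)"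
proof (induction t arbitrary: a)
  case 0
  then show ?case by (auto simp: P_0)
next
  case (Suc t)
  show ?case
  proof (cases "a = -1")
    case True
    then show ?thesis by (simp add: algebra_simps)
  next
    case False
    then have a0: "0 \<le> a" using Suc.prems by simp
    have "int (cnt (Suc t) a b) = int (cnt t (a+1) b) + int (cnt t (a-1) b)" using a0 by simp
    also have "\<dots> = (P t (b - (a+1)) - P t (b + (a+1) + 2)) + (P t (b - (a-1)) - P t (b + (a-1) + 2))"
      using Suc.IH[of "a+1"] Suc.IH[of "a-1"] a0 Suc.prems by simp
    also have "\<dots> = P (Suc t) (b - a) - P (Suc t) (b + a + 2)"
      using P_pascal[of t "b-a"] P_pascal[of t "b+a+2"] by (simp add: algebra_simps)
    finally show ?thesis .
  qed
qed

lemma cat_binom: "(Suc K) * ((2*K) choose (Suc K)) = K * ((2*K) choose K)"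
proof -
  have e: "2*K - K = K" by simp
  have h1: "K * ((2*K) choose K) = 2*K * ((2*K - 1) choose K)"
    using binomial_absorb_comp[of "2*K" K] unfolding e .
  have h2: "Suc K * ((2*K) choose Suc K) = 2*K * ((2*K - 1) choose K)" by (rule binomial_absorption)
  show ?thesis by (simp only: h1 h2)
qed

lemma t1: fixes C D K :: nat assumes h: "Suc K * D = K * C" shows "D \<le> C"
proof -
    have "K * C \<le> Suc K * C" by simp
    then have "Suc K * D \<le> Suc K * C" using h by simp
    then show "D \<le> C" using mult_le_cancel1[of "Suc K" D C] by (simp only:)
qed
lemma t2: fixes C D K :: nat assumes h: "Suc K * D = K * C" shows "(K+1) * (C - D) = C"
proof -
    have "(K+1) * (C - D) = (K+1) * C - (K+1) * D" by (simp add: diff_mult_distrib2)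
    also have "\<dots> = Suc K * C - K * C" using h by (simp only: Suc_eq_plus1)
    also have "\<dots> = C" by simp
    finally show "(K+1) * (C - D) = C" .
qed
lemma t3: fixes C D K :: nat assumes "(K+1) * (C - D) = C" shows "C div (K+1) = C - D"
proof -
    have "C div (K+1) = ((K+1) * (C - D)) div (K+1)" using assms by simp
    also have "\<dots> = C - D" by (rule nonzero_mult_div_cancel_left) simp
    finally show "C div (K+1) = C - D" .
qed
lemma t4: fixes C D K :: nat assumes "D \<le> C" "C div (K+1) = C - D" shows "int C - int D = int (C div (K+1))"
  using assms by (simp only: of_nat_diff)

lemma cnt_catalan: "int (cnt (2*K) 0 0) = int (((2 * K) choose K) div (K + 1))"
proof -
  have "int (cnt (2*K) 0 0) = P (2*K) 0 - P (2*K) 2" using cnt_closed[of 0 0 "2*K"] by (simp only: diff_zero add_0 order_refl)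
  also have "\<dots> = int ((2*K) choose K) - int ((2*K) choose (Suc K))"
  proof -
    have "P (2*K) 0 = Q (2*K) (int K)" unfolding P_def by simp
    moreover have "P (2*K) 2 = Q (2*K) (int K + 1)" unfolding P_def by simp
    moreover have "Q (2*K) (int K) = int ((2*K) choose K)" unfolding Q_def by simp
    moreover have "Q (2*K) (int K + 1) = int ((2*K) choose Suc K)"
    proof -
      have "nat (int K + 1) = Suc K" by simp
      then show ?thesis unfolding Q_def by simp
    qed
    ultimately show ?thesis by (simp only:)
  qed
  also have "\<dots> = int (((2 * K) choose K) div (K + 1))"
    by (rule t4[OF t1[OF cat_binom[of K]] t3[OF t2[OF cat_binom[of K]]]])
  finally show ?thesis .
qed


definition spair :: "nat \<Rightarrow> nat \<Rightarrow> bool list \<Rightarrow> int" where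
  "spair n i b = int (spin_phi n i b) - int (spin_eps n i b)"

lemma spin_eps_le1: "spin_eps n i b \<le> 1" unfolding spin_eps_def by simp
lemma spin_phi_le1: "spin_phi n i b \<le> 1" unfolding spin_phi_def by simp

lemma te_None: "tens_e n i bs = None \<longleftrightarrow> tens_eps n i bs = 0"
proof (induction bs)
  case Nil then show ?case by simp
next
  case (Cons b bs)
  show ?case
  proof (cases "spin_phi n i b \<ge> tens_eps n i bs")
    case True
    then show ?thesis by (simp add: spin_eps_def)
  next
    case False
    then have "tens_e n i bs \<noteq> None" using Cons.IH by simp
    then show ?thesis using False by simp
  qed
qed

lemma tf_None: "tens_f n i bs = None \<longleftrightarrow> tens_phi n i bs = 0"
proof (induction bs)
  case Nil then show ?case by simp
next
  case (Cons b bs)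
  show ?case
  proof (cases "spin_phi n i b > tens_eps n i bs")
    case True
    then have "spin_f n i b \<noteq> None" unfolding spin_phi_def by (auto split: if_splits)
    then show ?thesis using True by simp
  next
    case False
    then show ?thesis using Cons.IH by simp
  qed
qed

lemma phi_minus_eps: "int (tens_phi n i bs) - int (tens_eps n i bs) = sum_list (map (spair n i) bs)"
proof (induction bs)
  case Nil then show ?case by simp
next
  case (Cons b bs)
  then show ?case by (simp add: spair_def split: nat_diff_split)
qed

lemma all_less_Suc_split': "(\<forall>k<Suc N. PP k) \<longleftrightarrow> PP 0 \<and> (\<forall>k<N. PP (Suc k))"
  by (auto simp: less_Suc_eq_0_disj)

lemma eps_le: "0 \<le> c \<Longrightarrow> int (tens_eps n i bs) \<le> c \<longleftrightarrow>
   (\<forall>k<length bs. int (spin_eps n i (bs!k)) \<le> c + sum_list (map (spair n i) (take k bs)))"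
proof (induction bs arbitrary: c)
  case Nil then show ?case by simp
next
  case (Cons b bs)
  let ?e = "spin_eps n i b" and ?p = "spin_phi n i b" and ?E = "tens_eps n i bs"
  have L: "int (tens_eps n i (b # bs)) \<le> c \<longleftrightarrow> int ?e \<le> c \<and> int ?E \<le> c + spair n i b"
    by (simp add: spair_def split: nat_diff_split) arith
  have R: "(\<forall>k<length (b#bs). int (spin_eps n i ((b#bs)!k)) \<le> c + sum_list (map (spair n i) (take k (b#bs))))
     \<longleftrightarrow> int ?e \<le> c \<and> (\<forall>k<length bs. int (spin_eps n i (bs!k)) \<le> (c + spair n i b) + sum_list (map (spair n i) (take k bs)))"
    by (simp only: length_Cons all_less_Suc_split' nth_Cons_0 nth_Cons_Suc take_Cons' take_0) (simp add: algebra_simps)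
  show ?case
  proof (cases "int ?e \<le> c")
    case True
    have "0 \<le> c + spair n i b" using True unfolding spair_def by simp
    from Cons.IH[OF this] show ?thesis using L R True by simp
  next
    case False
    then show ?thesis using L R by simp
  qed
qed


lemma spin_ef: "spin_eps n i b = 1 \<Longrightarrow> spin_phi n i b = 0"
proof -
  assume "spin_eps n i b = 1"
  then have E: "spin_e n i b \<noteq> None" unfolding spin_eps_def by (cases "spin_e n i b = None") simp_all
  have "spin_f n i b = None"
  proof (cases "1 \<le> i \<and> i < n")
    case True
    have "\<not> b ! (i - 1) \<and> b ! i"
    proof (rule ccontr)
      assume "\<not> (\<not> b ! (i - 1) \<and> b ! i)"
      then have "spin_e n i b = None" using True unfolding spin_e_def by (simp only: if_False if_True) simp
      with E show False by simp
    qed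
    then show ?thesis using True unfolding spin_f_def by simp
  next
    case False
    show ?thesis
    proof (cases "i = n \<and> 1 \<le> n")
      case True
      have "\<not> b ! (n - 1)"
      proof
        assume "b ! (n - 1)"
        then have "spin_e n i b = None" using True False unfolding spin_e_def by simp
        with E show False by simp
      qed
      then show ?thesis using True False unfolding spin_f_def by simp
    next
      case False2: False
      then show ?thesis using False unfolding spin_f_def by simp
    qed
  qed
  then show ?thesis unfolding spin_phi_def by simp
qed

lemma spair_wt: assumes "1 \<le> i" "i < n"
  shows "2 * spair n i b = spin_wt2 b (i-1) - spin_wt2 b i"
proof -
  have c: "1 \<le> i \<and> i < n" using assms by simp
  show ?thesis
  proof (cases "b!(i-1)"; cases "b!i")
    assume "b!(i-1)" "b!i" then show ?thesis using c unfolding spair_def spin_eps_def spin_phi_def spin_e_def spin_f_def spin_wt2_def by simp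
  next
    assume "b!(i-1)" "\<not> b!i" then show ?thesis using c unfolding spair_def spin_eps_def spin_phi_def spin_e_def spin_f_def spin_wt2_def by simp
  next
    assume "\<not> b!(i-1)" "b!i" then show ?thesis using c unfolding spair_def spin_eps_def spin_phi_def spin_e_def spin_f_def spin_wt2_def by simp
  next
    assume "\<not> b!(i-1)" "\<not> b!i" then show ?thesis using c unfolding spair_def spin_eps_def spin_phi_def spin_e_def spin_f_def spin_wt2_def by simp
  qed
qed

lemma spair_wt_n: assumes "1 \<le> n"
  shows "spair n n b = spin_wt2 b (n-1)"
  using assms by (cases "b!(n-1)") (simp_all add: spair_def spin_eps_def spin_phi_def spin_e_def spin_f_def spin_wt2_def)

lemma tens_wt2_Cons: "tens_wt2 (b # bs) k = spin_wt2 b k + tens_wt2 bs k"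
  unfolding tens_wt2_def by simp

lemma tens_wt2_Nil: "tens_wt2 [] k = 0"
  unfolding tens_wt2_def by simp

lemma spair_sum_wt: assumes "1 \<le> i" "i < n"
  shows "2 * sum_list (map (spair n i) xs) = tens_wt2 xs (i-1) - tens_wt2 xs i"
proof (induction xs)
  case Nil then show ?case by (simp add: tens_wt2_Nil)
next
  case (Cons b xs)
  then show ?case using spair_wt[OF assms, of b] by (simp add: tens_wt2_Cons algebra_simps)
qed

lemma spair_sum_wt_n: assumes "1 \<le> n"
  shows "sum_list (map (spair n n) xs) = tens_wt2 xs (n-1)"
proof (induction xs)
  case Nil then show ?case by (simp add: tens_wt2_Nil)
next
  case (Cons b xs)
  then show ?case using spair_wt_n[OF assms, of b] by (simp add: tens_wt2_Cons algebra_simps)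
qed

lemma walk_nonneg:
  fixes S sp :: "nat \<Rightarrow> int" and e :: "nat \<Rightarrow> nat"
  assumes rec: "\<And>k. k < N \<Longrightarrow> S (Suc k) = S k + sp k" and S0: "S 0 = 0"
    and e1: "\<And>k. k < N \<Longrightarrow> e k \<le> 1"
    and spm: "\<And>k. k < N \<Longrightarrow> e k = 1 \<Longrightarrow> sp k = -1"
    and spp: "\<And>k. k < N \<Longrightarrow> e k = 0 \<Longrightarrow> sp k \<ge> 0"
  shows "(\<forall>k<N. int (e k) \<le> S k) \<longleftrightarrow> (\<forall>t\<le>N. 0 \<le> S t)"
proof
  assume H: "\<forall>k<N. int (e k) \<le> S k"
  show "\<forall>t\<le>N. 0 \<le> S t"
  proof (intro allI impI)
    fix t assume "t \<le> N"
    then show "0 \<le> S t"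
    proof (induction t)
      case 0 then show ?case using S0 by simp
    next
      case (Suc t)
      then have tN: "t < N" by simp
      have "e t = 0 \<or> e t = 1" using e1[OF tN] by linarith
      then show ?case
      proof
        assume "e t = 0"
        then show ?thesis using rec[OF tN] spp[OF tN] Suc by simp
      next
        assume "e t = 1"
        then show ?thesis using rec[OF tN] spm[OF tN] H tN by force
      qed
    qed
  qed
next
  assume H: "\<forall>t\<le>N. 0 \<le> S t"
  show "\<forall>k<N. int (e k) \<le> S k"
  proof (intro allI impI)
    fix k assume kN: "k < N"
    have "e k = 0 \<or> e k = 1" using e1[OF kN] by linarith
    then show "int (e k) \<le> S k"
    proof
      assume "e k = 0" then show ?thesis using H kN by simp
    next
      assume "e k = 1"
      then show ?thesis using rec[OF kN] spm[OF kN] H kN by (metis Suc_leI add.right_neutral diff_ge_0_iff_ge diff_minus_eq_add minus_minus of_nat_1 uminus_add_conv_diff)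
    qed
  qed
qed

definition Spart :: "nat \<Rightarrow> nat \<Rightarrow> bool list list \<Rightarrow> nat \<Rightarrow> int" where
  "Spart n i bs t = sum_list (map (spair n i) (take t bs))"

lemma eps0_iff: assumes "length bs = N"
  shows "tens_eps n i bs = 0 \<longleftrightarrow> (\<forall>t\<le>N. 0 \<le> Spart n i bs t)"
proof -
  have "tens_eps n i bs = 0 \<longleftrightarrow> int (tens_eps n i bs) \<le> 0" by simp
  also have "\<dots> \<longleftrightarrow> (\<forall>k<N. int (spin_eps n i (bs!k)) \<le> Spart n i bs k)"
    using eps_le[of 0 n i bs] assms unfolding Spart_def by simp
  also have "\<dots> \<longleftrightarrow> (\<forall>t\<le>N. 0 \<le> Spart n i bs t)"
  proof (rule walk_nonneg)
    fix k assume "k < N"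
    then show "Spart n i bs (Suc k) = Spart n i bs k + spair n i (bs!k)"
      unfolding Spart_def using assms by (simp add: take_Suc_conv_app_nth)
  next
    show "Spart n i bs 0 = 0" unfolding Spart_def by simp
  next
    fix k show "spin_eps n i (bs!k) \<le> 1" by (rule spin_eps_le1)
  next
    fix k assume "spin_eps n i (bs!k) = 1"
    then show "spair n i (bs!k) = -1" using spin_ef[of n i "bs!k"] unfolding spair_def by simp
  next
    fix k assume "spin_eps n i (bs!k) = 0"
    then show "spair n i (bs!k) \<ge> 0" unfolding spair_def by simp
  qed
  finally show ?thesis .
qed

definition Xw :: "bool list list \<Rightarrow> nat \<Rightarrow> nat \<Rightarrow> int" where
  "Xw bs t k = tens_wt2 (take t bs) k"

definition good :: "nat \<Rightarrow> nat \<Rightarrow> bool list list set" where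
  "good n N = {bs \<in> tensor_power n N. (\<forall>k<n. Xw bs N k = 0) \<and>
     (\<forall>t\<le>N. \<forall>j. Suc j < n \<longrightarrow> Xw bs t (Suc j) \<le> Xw bs t j) \<and> (\<forall>t\<le>N. 0 \<le> Xw bs t (n-1))}"

lemma Spart_Xw: assumes "1 \<le> i" "i < n" shows "2 * Spart n i bs t = Xw bs t (i-1) - Xw bs t i"
  unfolding Spart_def Xw_def using spair_sum_wt[OF assms] by simp

lemma Spart_Xw_n: assumes "1 \<le> n" shows "Spart n n bs t = Xw bs t (n-1)"
  unfolding Spart_def Xw_def using spair_sum_wt_n[OF assms] by simp

lemma dom_iff: assumes n1: "1 \<le> n" and len: "length bs = N"
  shows "(\<forall>i\<in>{1..n}. tens_eps n i bs = 0) \<longleftrightarrow>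
    ((\<forall>t\<le>N. \<forall>j. Suc j < n \<longrightarrow> Xw bs t (Suc j) \<le> Xw bs t j) \<and> (\<forall>t\<le>N. 0 \<le> Xw bs t (n-1)))"
proof -
  have "(\<forall>i\<in>{1..n}. tens_eps n i bs = 0) \<longleftrightarrow> (\<forall>i\<in>{1..n}. \<forall>t\<le>N. 0 \<le> Spart n i bs t)"
    using eps0_iff[OF len] by simp
  also have "\<dots> \<longleftrightarrow> (\<forall>j. Suc j < n \<longrightarrow> (\<forall>t\<le>N. 0 \<le> Spart n (Suc j) bs t)) \<and> (\<forall>t\<le>N. 0 \<le> Spart n n bs t)"
  proof
    assume H: "\<forall>i\<in>{1..n}. \<forall>t\<le>N. 0 \<le> Spart n i bs t"
    show "(\<forall>j. Suc j < n \<longrightarrow> (\<forall>t\<le>N. 0 \<le> Spart n (Suc j) bs t)) \<and> (\<forall>t\<le>N. 0 \<le> Spart n n bs t)"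
      using H n1 by simp
  next
    assume H: "(\<forall>j. Suc j < n \<longrightarrow> (\<forall>t\<le>N. 0 \<le> Spart n (Suc j) bs t)) \<and> (\<forall>t\<le>N. 0 \<le> Spart n n bs t)"
    show "\<forall>i\<in>{1..n}. \<forall>t\<le>N. 0 \<le> Spart n i bs t"
    proof
      fix i assume i: "i \<in> {1..n}"
      show "\<forall>t\<le>N. 0 \<le> Spart n i bs t"
      proof (cases "i = n")
        case True then show ?thesis using H by simp
      next
        case False
        then have "Suc (i - 1) < n" "Suc (i-1) = i" using i by auto
        then show ?thesis using H by metis
      qed
    qed
  qed
  also have "\<dots> \<longleftrightarrow> ((\<forall>t\<le>N. \<forall>j. Suc j < n \<longrightarrow> Xw bs t (Suc j) \<le> Xw bs t j) \<and> (\<forall>t\<le>N. 0 \<le> Xw bs t (n-1)))"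
  proof -
    have a: "0 \<le> Spart n (Suc j) bs t \<longleftrightarrow> Xw bs t (Suc j) \<le> Xw bs t j" if "Suc j < n" for j t
      using Spart_Xw[of "Suc j" n bs t] that by simp linarith
    have b: "Spart n n bs t = Xw bs t (n-1)" for t using Spart_Xw_n[OF n1] by simp
    show ?thesis using a b by auto
  qed
  finally show ?thesis .
qed

lemma triv_good: assumes n1: "1 \<le> n" shows "trivial_components n N = good n N"
proof (intro equalityI subsetI)
  fix bs
  assume H: "bs \<in> trivial_components n N"
  then have tp: "bs \<in> tensor_power n N" and w: "\<forall>k<n. tens_wt2 bs k = 0"
    and e: "\<forall>i\<in>{1..n}. tens_e n i bs = None" unfolding trivial_components_def by auto
  have len: "length bs = N" using tp unfolding tensor_power_def by simp
  have "\<forall>i\<in>{1..n}. tens_eps n i bs = 0" using e te_None by blast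
  then have D: "(\<forall>t\<le>N. \<forall>j. Suc j < n \<longrightarrow> Xw bs t (Suc j) \<le> Xw bs t j) \<and> (\<forall>t\<le>N. 0 \<le> Xw bs t (n-1))"
    using dom_iff[OF n1 len] by blast
  have "\<forall>k<n. Xw bs N k = 0" using w len unfolding Xw_def by simp
  then show "bs \<in> good n N" unfolding good_def using tp D by blast
next
  fix bs
  assume H: "bs \<in> good n N"
  then have tp: "bs \<in> tensor_power n N" and w: "\<forall>k<n. Xw bs N k = 0"
    and D: "(\<forall>t\<le>N. \<forall>j. Suc j < n \<longrightarrow> Xw bs t (Suc j) \<le> Xw bs t j) \<and> (\<forall>t\<le>N. 0 \<le> Xw bs t (n-1))"
    unfolding good_def by auto
  have len: "length bs = N" using tp unfolding tensor_power_def by simp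
  have eps0: "\<forall>i\<in>{1..n}. tens_eps n i bs = 0" using dom_iff[OF n1 len] D by blast
  have S0: "Spart n i bs N = 0" if "i \<in> {1..n}" for i
  proof (cases "i = n")
    case True then show ?thesis using Spart_Xw_n[OF n1, of bs N] w n1 by simp
  next
    case False
    then have "1 \<le> i" "i < n" using that by auto
    then show ?thesis using Spart_Xw[of i n bs N] w by simp
  qed
  have phi0: "\<forall>i\<in>{1..n}. tens_phi n i bs = 0"
  proof
    fix i assume i: "i \<in> {1..n}"
    have "int (tens_phi n i bs) - int (tens_eps n i bs) = Spart n i bs N"
      using phi_minus_eps[of n i bs] len unfolding Spart_def by simp
    then show "tens_phi n i bs = 0" using S0[OF i] eps0 i by simp
  qed
  have wt: "\<forall>k<n. tens_wt2 bs k = 0" using w len unfolding Xw_def by simp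
  show "bs \<in> trivial_components n N" unfolding trivial_components_def
    using tp wt eps0 phi0 te_None tf_None by blast
qed


definition walkset :: "nat \<Rightarrow> int \<Rightarrow> int \<Rightarrow> int list set" where
  "walkset N a b = {H. length H = Suc N \<and> H!0 = a \<and> H!N = b \<and> (\<forall>t\<le>N. 0 \<le> H!t) \<and> (\<forall>t<N. \<bar>H!Suc t - H!t\<bar> = 1)}"


lemma all_le_Suc_split': "(\<forall>k\<le>Suc N. PP k) \<longleftrightarrow> PP 0 \<and> (\<forall>k\<le>N. PP (Suc k))"
  by (metis Suc_le_mono le0 not0_implies_Suc)

lemma walkset_0: "walkset 0 a b = (if a = b \<and> 0 \<le> a then {[a]} else {})"
proof -
  have "H \<in> walkset 0 a b \<longleftrightarrow> H = [a] \<and> a = b \<and> 0 \<le> a" for H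
  proof
    assume "H \<in> walkset 0 a b"
    then have "length H = 1" "H!0 = a" "H!0 = b" "0 \<le> H!0" unfolding walkset_def by auto
    then show "H = [a] \<and> a = b \<and> 0 \<le> a"
      by (metis One_nat_def length_0_conv length_Suc_conv nth_Cons_0)
  next
    assume "H = [a] \<and> a = b \<and> 0 \<le> a"
    then show "H \<in> walkset 0 a b" unfolding walkset_def by auto
  qed
  then show ?thesis by auto
qed

lemma Cons_walkset: "x # G \<in> walkset (Suc N) a b \<longleftrightarrow> x = a \<and> 0 \<le> a \<and> \<bar>G!0 - a\<bar> = 1 \<and> G \<in> walkset N (G!0) b"
  unfolding walkset_def
  by (simp only: mem_Collect_eq length_Cons nth_Cons_0 nth_Cons_Suc all_le_Suc_split' all_less_Suc_split' Suc_inject) auto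

lemma walkset_Suc: "0 \<le> a \<Longrightarrow> walkset (Suc N) a b = (Cons a) ` (walkset N (a+1) b \<union> walkset N (a-1) b)"
proof (intro equalityI subsetI)
  fix H assume a: "0 \<le> a" and H: "H \<in> walkset (Suc N) a b"
  then have "H \<noteq> []" unfolding walkset_def by auto
  then obtain x G where HG: "H = x # G" by (cases H) auto
  then have "x = a" "\<bar>G!0 - a\<bar> = 1" "G \<in> walkset N (G!0) b" using H Cons_walkset by auto
  moreover then have "G!0 = a + 1 \<or> G!0 = a - 1" by linarith
  ultimately show "H \<in> (Cons a) ` (walkset N (a+1) b \<union> walkset N (a-1) b)" using HG by auto
next
  fix H assume a: "0 \<le> a" and H: "H \<in> (Cons a) ` (walkset N (a+1) b \<union> walkset N (a-1) b)"
  then obtain G where G: "H = a # G" "G \<in> walkset N (a+1) b \<union> walkset N (a-1) b" by auto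
  then have "(G!0 = a + 1 \<and> G \<in> walkset N (G!0) b) \<or> (G!0 = a - 1 \<and> G \<in> walkset N (G!0) b)"
    unfolding walkset_def by auto
  then show "H \<in> walkset (Suc N) a b" using G(1) a Cons_walkset by auto
qed

lemma walkset_neg: "a < 0 \<Longrightarrow> walkset N a b = {}"
  unfolding walkset_def by force

lemma walkset_card: "finite (walkset N a b) \<and> card (walkset N a b) = cnt N a b"
proof (induction N arbitrary: a)
  case 0 then show ?case by (simp add: walkset_0)
next
  case (Suc N)
  show ?case
  proof (cases "0 \<le> a")
    case True
    have d: "walkset N (a+1) b \<inter> walkset N (a-1) b = {}" unfolding walkset_def by auto
    have f: "finite (walkset N (a+1) b)" "finite (walkset N (a-1) b)" using Suc.IH by auto
    have "card (walkset (Suc N) a b) = card (walkset N (a+1) b \<union> walkset N (a-1) b)"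
      unfolding walkset_Suc[OF True] by (rule card_image) simp
    also have "\<dots> = cnt N (a+1) b + cnt N (a-1) b" using card_Un_disjoint[OF f d] Suc.IH by simp
    finally show ?thesis using True f walkset_Suc[OF True] by simp
  next
    case False
    then show ?thesis by (simp add: walkset_neg)
  qed
qed

lemma splice_walk:
  assumes G1: "G1 \<in> walkset N a1 b1" and G2: "G2 \<in> walkset N a2 b2" and t: "t < N" and eq: "G1!t = G2!t"
  shows "take (Suc t) G1 @ drop (Suc t) G2 \<in> walkset N a1 b2"
proof -
  let ?G = "take (Suc t) G1 @ drop (Suc t) G2"
  have l1: "length G1 = Suc N" and l2: "length G2 = Suc N" using G1 G2 unfolding walkset_def by auto
  have nth: "?G ! s = (if s \<le> t then G1 ! s else G2 ! s)" if "s \<le> N" for s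
    using l1 l2 t that by (simp add: nth_append min_def)
  have len: "length ?G = Suc N" using l1 l2 t by simp
  have s0: "?G ! 0 = a1" using nth[of 0] G1 unfolding walkset_def by simp
  have sN: "?G ! N = b2" using nth[of N] G2 t unfolding walkset_def by simp
  have nn: "\<forall>s\<le>N. 0 \<le> ?G ! s" using nth G1 G2 unfolding walkset_def by simp
  have st: "\<forall>s<N. \<bar>?G ! Suc s - ?G ! s\<bar> = 1"
  proof (intro allI impI)
    fix s assume s: "s < N"
    have a1: "\<bar>G1 ! Suc s - G1 ! s\<bar> = 1" and a2: "\<bar>G2 ! Suc s - G2 ! s\<bar> = 1"
      using G1 G2 s unfolding walkset_def by auto
    consider "Suc s \<le> t" | "s = t" | "t < s" by linarith
    then show "\<bar>?G ! Suc s - ?G ! s\<bar> = 1"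
    proof cases
      case 1 then show ?thesis using nth[of s] nth[of "Suc s"] s a1 by simp
    next
      case 2 then show ?thesis using nth[of s] nth[of "Suc s"] s a2 eq by simp
    next
      case 3 then show ?thesis using nth[of s] nth[of "Suc s"] s a2 by simp
    qed
  qed
  show ?thesis unfolding walkset_def using len s0 sN nn st by blast
qed

lemma walk_parity: assumes H: "H \<in> walkset N a b" shows "t \<le> N \<Longrightarrow> even (H!t - a - int t)"
proof (induction t)
  case 0 then show ?case using H unfolding walkset_def by simp
next
  case (Suc t)
  then have "\<bar>H ! Suc t - H ! t\<bar> = 1" using H unfolding walkset_def by auto
  then have "H ! Suc t = H ! t + 1 \<or> H ! Suc t = H ! t - 1" by linarith
  then show ?case using Suc by auto
qed

lemma order_keep:
  assumes G1: "G1 \<in> walkset N a1 b1" and G2: "G2 \<in> walkset N a2 b2"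
    and ev: "even (a1 - a2)" and lt: "a2 < a1" and nc: "\<forall>t\<le>N. G1!t \<noteq> G2!t"
  shows "t \<le> N \<Longrightarrow> G2!t < G1!t"
proof (induction t)
  case 0 then show ?case using G1 G2 lt unfolding walkset_def by simp
next
  case (Suc t)
  have s1: "\<bar>G1 ! Suc t - G1 ! t\<bar> = 1" and s2: "\<bar>G2 ! Suc t - G2 ! t\<bar> = 1"
    using G1 G2 Suc.prems unfolding walkset_def by auto
  have e1: "even (G1!t - a1 - int t)" "even (G2!t - a2 - int t)"
    using walk_parity[OF G1] walk_parity[OF G2] Suc.prems by auto
  have "even (G1!t - G2!t)" using e1 ev by presburger
  moreover have "G2!t < G1!t" using Suc by simp
  ultimately have "G2!t + 2 \<le> G1!t" by presburger
  moreover have "G1 ! Suc t \<noteq> G2 ! Suc t" using nc Suc.prems by simp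
  ultimately show ?case using s1 s2 by linarith
qed

definition col :: "nat \<Rightarrow> nat \<Rightarrow> (nat \<Rightarrow> int list) \<Rightarrow> bool" where
  "col n N W = (\<exists>t i j. t \<le> N \<and> i < j \<and> j < n \<and> W i ! t = W j ! t)"

definition t0 :: "nat \<Rightarrow> nat \<Rightarrow> (nat \<Rightarrow> int list) \<Rightarrow> nat" where
  "t0 n N W = (LEAST t. \<exists>i j. t \<le> N \<and> i < j \<and> j < n \<and> W i ! t = W j ! t)"

definition i0 :: "nat \<Rightarrow> nat \<Rightarrow> (nat \<Rightarrow> int list) \<Rightarrow> nat" where
  "i0 n N W = (LEAST i. \<exists>j. i < j \<and> j < n \<and> W i ! t0 n N W = W j ! t0 n N W)"

definition j0 :: "nat \<Rightarrow> nat \<Rightarrow> (nat \<Rightarrow> int list) \<Rightarrow> nat" where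
  "j0 n N W = (LEAST j. i0 n N W < j \<and> j < n \<and> W (i0 n N W) ! t0 n N W = W j ! t0 n N W)"

definition swp :: "nat \<Rightarrow> nat \<Rightarrow> (nat \<Rightarrow> int list) \<Rightarrow> (nat \<Rightarrow> int list)" where
  "swp n N W = W(i0 n N W := take (Suc (t0 n N W)) (W (i0 n N W)) @ drop (Suc (t0 n N W)) (W (j0 n N W)),
                 j0 n N W := take (Suc (t0 n N W)) (W (j0 n N W)) @ drop (Suc (t0 n N W)) (W (i0 n N W)))"

lemma col_props:
  assumes "col n N W"
  shows "t0 n N W \<le> N" "i0 n N W < j0 n N W" "j0 n N W < n"
    "W (i0 n N W) ! t0 n N W = W (j0 n N W) ! t0 n N W"
    "\<And>t i j. t < t0 n N W \<Longrightarrow> i < j \<Longrightarrow> j < n \<Longrightarrow> W i ! t \<noteq> W j ! t"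
proof -
  have ex: "\<exists>t i j. t \<le> N \<and> i < j \<and> j < n \<and> W i ! t = W j ! t" using assms unfolding col_def by blast
  have T: "\<exists>i j. t0 n N W \<le> N \<and> i < j \<and> j < n \<and> W i ! t0 n N W = W j ! t0 n N W"
    unfolding t0_def using LeastI_ex[OF ex] .
  then have exi: "\<exists>i j. i < j \<and> j < n \<and> W i ! t0 n N W = W j ! t0 n N W" by blast
  have I: "\<exists>j. i0 n N W < j \<and> j < n \<and> W (i0 n N W) ! t0 n N W = W j ! t0 n N W"
    unfolding i0_def using LeastI_ex[OF exi] .
  have J: "i0 n N W < j0 n N W \<and> j0 n N W < n \<and> W (i0 n N W) ! t0 n N W = W (j0 n N W) ! t0 n N W"
    unfolding j0_def using LeastI_ex[OF I] .
  show "t0 n N W \<le> N" using T by blast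
  show "i0 n N W < j0 n N W" "j0 n N W < n" "W (i0 n N W) ! t0 n N W = W (j0 n N W) ! t0 n N W" using J by auto
  fix t i j assume "t < t0 n N W" "i < j" "j < n"
  then show "W i ! t \<noteq> W j ! t"
    using not_less_Least[of t "\<lambda>t. \<exists>i j. t \<le> N \<and> i < j \<and> j < n \<and> W i ! t = W j ! t"] T
    unfolding t0_def by auto
qed

lemma swp_same:
  assumes c: "col n N W" and len: "\<And>k. k < n \<Longrightarrow> length (W k) = Suc N" and t: "t \<le> t0 n N W"
  shows "swp n N W k ! t = W k ! t"
proof -
  note P = col_props[OF c]
  let ?t = "t0 n N W" and ?i = "i0 n N W" and ?j = "j0 n N W"
  have li: "length (W ?i) = Suc N" and lj: "length (W ?j) = Suc N" using P len by auto
  have ne: "?i \<noteq> ?j" using P by simp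
  consider "k = ?i" | "k = ?j" | "k \<noteq> ?i \<and> k \<noteq> ?j" by blast
  then show ?thesis
  proof cases
    case 1 then show ?thesis unfolding swp_def using ne li lj t P(1) by (simp add: nth_append)
  next
    case 2 then show ?thesis unfolding swp_def using ne li lj t P(1) by (simp add: nth_append)
  next
    case 3 then show ?thesis unfolding swp_def by simp
  qed
qed

lemma swp_indices:
  assumes c: "col n N W" and len: "\<And>k. k < n \<Longrightarrow> length (W k) = Suc N"
  shows "col n N (swp n N W)" "t0 n N (swp n N W) = t0 n N W" "i0 n N (swp n N W) = i0 n N W"
    "j0 n N (swp n N W) = j0 n N W"
proof -
  note P = col_props[OF c]
  let ?W = "swp n N W"
  have S: "\<And>k t. t \<le> t0 n N W \<Longrightarrow> ?W k ! t = W k ! t" using swp_same[OF c len] by blast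
  have ct: "\<exists>i j. t0 n N W \<le> N \<and> i < j \<and> j < n \<and> ?W i ! t0 n N W = ?W j ! t0 n N W"
    using P S[of "t0 n N W"] by auto
  then show "col n N ?W" unfolding col_def by blast
  show T: "t0 n N ?W = t0 n N W"
    unfolding t0_def[of n N ?W]
  proof (rule Least_equality)
    show "\<exists>i j. t0 n N W \<le> N \<and> i < j \<and> j < n \<and> ?W i ! t0 n N W = ?W j ! t0 n N W" by (rule ct)
  next
    fix y assume y: "\<exists>i j. y \<le> N \<and> i < j \<and> j < n \<and> ?W i ! y = ?W j ! y"
    show "t0 n N W \<le> y"
    proof (rule ccontr)
      assume "\<not> t0 n N W \<le> y"
      then have yl: "y < t0 n N W" by simp
      from y obtain i j where "i < j" "j < n" "?W i ! y = ?W j ! y" by blast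
      then show False using P(5)[OF yl] S[of y] yl by auto
    qed
  qed
  have eqI: "(\<lambda>i. \<exists>j. i < j \<and> j < n \<and> ?W i ! t0 n N ?W = ?W j ! t0 n N ?W) =
        (\<lambda>i. \<exists>j. i < j \<and> j < n \<and> W i ! t0 n N W = W j ! t0 n N W)"
    unfolding T using S[of "t0 n N W"] by auto
  show I: "i0 n N ?W = i0 n N W" unfolding i0_def eqI ..
  have eqJ: "(\<lambda>j. i0 n N ?W < j \<and> j < n \<and> ?W (i0 n N ?W) ! t0 n N ?W = ?W j ! t0 n N ?W) =
        (\<lambda>j. i0 n N W < j \<and> j < n \<and> W (i0 n N W) ! t0 n N W = W j ! t0 n N W)"
    unfolding T I using S[of "t0 n N W"] by auto
  show "j0 n N ?W = j0 n N W" unfolding j0_def eqJ ..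
qed

lemma swp_swp:
  assumes c: "col n N W" and len: "\<And>k. k < n \<Longrightarrow> length (W k) = Suc N"
  shows "swp n N (swp n N W) = W"
proof -
  note P = col_props[OF c]
  note Q = swp_indices[OF c len]
  let ?t = "t0 n N W" and ?i = "i0 n N W" and ?j = "j0 n N W"
  have li: "length (W ?i) = Suc N" and lj: "length (W ?j) = Suc N" using P len by auto
  have ne: "?i \<noteq> ?j" using P by simp
  have tN: "Suc ?t \<le> Suc N" using P by simp
  have A: "swp n N W ?i = take (Suc ?t) (W ?i) @ drop (Suc ?t) (W ?j)" unfolding swp_def using ne by simp
  have B: "swp n N W ?j = take (Suc ?t) (W ?j) @ drop (Suc ?t) (W ?i)" unfolding swp_def by simp
  have C: "\<And>k. k \<noteq> ?i \<Longrightarrow> k \<noteq> ?j \<Longrightarrow> swp n N W k = W k" unfolding swp_def by simp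
  have tk: "take (Suc ?t) (take (Suc ?t) X @ Y) = take (Suc ?t) X" if "length X = Suc N" for X Y :: "int list"
    using that tN by simp
  have dr: "drop (Suc ?t) (take (Suc ?t) X @ Y) = Y" if "length X = Suc N" for X Y :: "int list"
    using that tN by simp
  have E: "swp n N (swp n N W) = (swp n N W)(?i := take (Suc ?t) (swp n N W ?i) @ drop (Suc ?t) (swp n N W ?j),
       ?j := take (Suc ?t) (swp n N W ?j) @ drop (Suc ?t) (swp n N W ?i))"
    using swp_def[of n N "swp n N W"] by (simp only: Q(2) Q(3) Q(4))
  show ?thesis
  proof (rule ext)
    fix k
    consider "k = ?i" | "k = ?j" | "k \<noteq> ?i \<and> k \<noteq> ?j" by blast
    then show "swp n N (swp n N W) k = W k"
    proof cases
      case 1 then show ?thesis unfolding E using ne A B li lj tN by (simp add: min_def)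
    next
      case 2 then show ?thesis unfolding E using ne A B li lj tN by (simp add: min_def)
    next
      case 3 then show ?thesis unfolding E using C by simp
    qed
  qed
qed

definition LX :: "nat \<Rightarrow> nat \<Rightarrow> (nat \<Rightarrow> int) \<Rightarrow> ((nat \<Rightarrow> nat) \<times> (nat \<Rightarrow> int list)) set" where
  "LX n N a = Sigma {p. p permutes {0..<n}} (\<lambda>p. PiE {0..<n} (\<lambda>i. walkset N (a i) (a (p i))))"

definition NC :: "nat \<Rightarrow> nat \<Rightarrow> (nat \<Rightarrow> int) \<Rightarrow> (nat \<Rightarrow> int list) set" where
  "NC n N a = {W \<in> PiE {0..<n} (\<lambda>i. walkset N (a i) (a i)). \<not> col n N W}"

definition gmap :: "nat \<Rightarrow> nat \<Rightarrow> ((nat \<Rightarrow> nat) \<times> (nat \<Rightarrow> int list)) \<Rightarrow> ((nat \<Rightarrow> nat) \<times> (nat \<Rightarrow> int list))" where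
  "gmap n N x = (fst x \<circ> transpose (i0 n N (snd x)) (j0 n N (snd x)), swp n N (snd x))"

lemma finite_LX: "finite (LX n N a)"
  unfolding LX_def
  by (rule finite_SigmaI) (auto intro!: finite_PiE simp: finite_permutations walkset_card)

lemma det_expand:
  "det (mat n n (\<lambda>(i,j). int (cnt N (a i) (a j)))) = (\<Sum>x\<in>LX n N a. signof (fst x) :: int)"
proof -
  let ?A = "mat n n (\<lambda>(i,j). int (cnt N (a i) (a j)))"
  have "det ?A = (\<Sum>p\<in>{p. p permutes {0..<n}}. signof p * (\<Prod>i=0..<n. ?A $$ (i, p i)))"
    unfolding det_def by simp
  also have "\<dots> = (\<Sum>p\<in>{p. p permutes {0..<n}}. \<Sum>W\<in>PiE {0..<n} (\<lambda>i. walkset N (a i) (a (p i))). signof p)"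
  proof (rule sum.cong[OF refl])
    fix p assume "p \<in> {p. p permutes {0..<n}}"
    then have p: "p permutes {0..<n}" by simp
    have pi: "p i < n" if "i < n" for i using p that by (simp add: permutes_in_image)
    have "(\<Prod>i=0..<n. ?A $$ (i, p i)) = (\<Prod>i=0..<n. int (card (walkset N (a i) (a (p i)))))"
      using pi walkset_card by (intro prod.cong) auto
    also have "\<dots> = int (\<Prod>i=0..<n. card (walkset N (a i) (a (p i))))" by simp
    also have "\<dots> = int (card (PiE {0..<n} (\<lambda>i. walkset N (a i) (a (p i)))))"
      by (simp add: card_PiE)
    finally show "signof p * (\<Prod>i=0..<n. ?A $$ (i, p i)) = (\<Sum>W\<in>PiE {0..<n} (\<lambda>i. walkset N (a i) (a (p i))). signof p)"
      by simp
  qed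
  also have "\<dots> = (\<Sum>x\<in>LX n N a. signof (fst x))"
    unfolding LX_def by (subst sum.Sigma) (auto intro!: finite_PiE simp: finite_permutations walkset_card case_prod_unfold)
  finally show ?thesis .
qed

lemma sum_invol_zero:
  fixes f :: "'a \<Rightarrow> int"
  assumes fin: "finite S" and g1: "\<And>x. x \<in> S \<Longrightarrow> g x \<in> S" and g2: "\<And>x. x \<in> S \<Longrightarrow> g (g x) = x"
    and gf: "\<And>x. x \<in> S \<Longrightarrow> f (g x) = - f x"
  shows "sum f S = 0"
proof -
  have "sum (\<lambda>x. f (g x)) S = sum f S"
    by (rule sum.reindex_bij_witness[where i=g and j=g]) (use g1 g2 in auto)
  then have "- sum f S = sum f S" using gf by (simp add: sum_negf)
  then show ?thesis by simp
qed

context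
  fixes n N :: nat and a :: "nat \<Rightarrow> int"
  assumes dec: "\<And>i j. i < j \<Longrightarrow> j < n \<Longrightarrow> a j < a i"
    and ev: "\<And>i. i < n \<Longrightarrow> even (a i)"
begin

lemma a_inj: "i < n \<Longrightarrow> j < n \<Longrightarrow> a i = a j \<Longrightarrow> i = j"
  using dec by (metis less_irrefl nat_neq_iff)

lemma g_props:
  assumes x: "x \<in> LX n N a" and c: "col n N (snd x)"
  shows "gmap n N x \<in> LX n N a" "col n N (snd (gmap n N x))" "gmap n N (gmap n N x) = x"
    "signof (fst (gmap n N x)) = - (signof (fst x) :: int)"
proof -
  obtain p W where xpw: "x = (p, W)" by (cases x)
  have p: "p permutes {0..<n}" and W: "W \<in> PiE {0..<n} (\<lambda>i. walkset N (a i) (a (p i)))"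
    using x unfolding xpw LX_def by auto
  have Wk: "W k \<in> walkset N (a k) (a (p k))" if "k < n" for k using W that by auto
  have len: "length (W k) = Suc N" if "k < n" for k using Wk[OF that] unfolding walkset_def by simp
  have c': "col n N W" using c xpw by simp
  note P = col_props[OF c']
  note Q = swp_indices[OF c' len]
  define i where "i = i0 n N W"
  define j where "j = j0 n N W"
  define t where "t = t0 n N W"
  have ij: "i < j" "j < n" "t \<le> N" "W i ! t = W j ! t" using P unfolding i_def j_def t_def by auto
  have pi: "p k < n" if "k < n" for k using p that by (simp add: permutes_in_image)
  have pij: "p i \<noteq> p j"
  proof
    assume "p i = p j"
    then have "i = j" using permutes_inj[OF p] by (simp add: inj_eq)
    then show False using ij by simp
  qed
  have tN: "t < N"
  proof (rule ccontr)
    assume "\<not> t < N"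
    then have "t = N" using ij by simp
    then have "a (p i) = a (p j)" using ij Wk[of i] Wk[of j] unfolding walkset_def by auto
    then show False using a_inj pi ij pij by (meson order.strict_trans)
  qed
  define tau where "tau = transpose i j"
  have tau_p: "tau permutes {0..<n}" unfolding tau_def using ij by (intro permutes_swap_id) auto
  have p': "p \<circ> tau permutes {0..<n}" using permutes_compose[OF tau_p p] .
  have swpi: "swp n N W i = take (Suc t) (W i) @ drop (Suc t) (W j)"
    unfolding swp_def i_def j_def t_def using ij(1) unfolding i_def j_def by simp
  have swpj: "swp n N W j = take (Suc t) (W j) @ drop (Suc t) (W i)"
    unfolding swp_def i_def j_def t_def by simp
  have swpk: "swp n N W k = W k" if "k \<noteq> i" "k \<noteq> j" for k
    unfolding swp_def using that unfolding i_def j_def by simp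
  have mem: "swp n N W \<in> PiE {0..<n} (\<lambda>k. walkset N (a k) (a ((p \<circ> tau) k)))"
  proof (rule PiE_I)
    fix k assume "k \<in> {0..<n}"
    then have k: "k < n" by simp
    consider "k = i" | "k = j" | "k \<noteq> i \<and> k \<noteq> j" by blast
    then show "swp n N W k \<in> walkset N (a k) (a ((p \<circ> tau) k))"
    proof cases
      case 1
      have "(p \<circ> tau) k = p j" unfolding 1 tau_def by simp
      then show ?thesis unfolding swpi 1 using splice_walk[OF Wk[of i] Wk[of j] tN ij(4)] ij by simp
    next
      case 2
      have "(p \<circ> tau) k = p i" unfolding 2 tau_def by simp
      then show ?thesis unfolding swpj 2 using splice_walk[OF Wk[of j] Wk[of i] tN ij(4)[symmetric]] ij by simp
    next
      case 3
      have "(p \<circ> tau) k = p k" using 3 unfolding tau_def by (simp add: transpose_apply_other)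
      then show ?thesis using swpk 3 Wk[OF k] by simp
    qed
  next
    fix k assume "k \<notin> {0..<n}"
    then have "k \<noteq> i" "k \<noteq> j" "W k = undefined" using ij W by auto
    then show "swp n N W k = undefined" using swpk by simp
  qed
  have g: "gmap n N x = (p \<circ> tau, swp n N W)" unfolding gmap_def xpw tau_def i_def j_def by simp
  show "gmap n N x \<in> LX n N a" unfolding g LX_def using p' mem by simp
  show "col n N (snd (gmap n N x))" unfolding g using Q(1) by simp
  have gg: "gmap n N (gmap n N x) = (p \<circ> tau \<circ> tau, swp n N (swp n N W))"
  proof -
    have "gmap n N (gmap n N x) = gmap n N (p \<circ> tau, swp n N W)" using g by simp
    also have "\<dots> = (p \<circ> tau \<circ> tau, swp n N (swp n N W))"
      unfolding gmap_def using Q(3,4) unfolding tau_def i_def j_def by simp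
    finally show ?thesis .
  qed
  have tt: "p \<circ> tau \<circ> tau = p" unfolding tau_def by (simp add: comp_assoc)
  show "gmap n N (gmap n N x) = x" using gg swp_swp[OF c' len] tt xpw by simp
  have "signof (p \<circ> tau) = (signof p * signof tau :: int)" by (rule signof_compose[OF p tau_p])
  moreover have "signof tau = (-1 :: int)" unfolding tau_def using ij by (simp add: sign_swap_id)
  ultimately show "signof (fst (gmap n N x)) = - (signof (fst x) :: int)" using g xpw by simp
qed

lemma nocol_id:
  assumes x: "(p, W) \<in> LX n N a" and nc: "\<not> col n N W"
  shows "p = id"
proof -
  have p: "p permutes {0..<n}" and W: "W \<in> PiE {0..<n} (\<lambda>i. walkset N (a i) (a (p i)))"
    using x unfolding LX_def by auto
  have Wk: "W k \<in> walkset N (a k) (a (p k))" if "k < n" for k using W that by auto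
  have pi: "p k < n" if "k < n" for k using p that by (simp add: permutes_in_image)
  have mono: "p i < p j" if ij: "i < j" "j < n" for i j
  proof -
    have ncij: "\<forall>t\<le>N. W i ! t \<noteq> W j ! t" using nc ij unfolding col_def by blast
    have e: "even (a i - a j)" using ev ij by simp
    have "W j ! N < W i ! N"
      using order_keep[OF Wk[of i] Wk[of j] e dec[OF ij] ncij, of N] ij by simp
    then have lt: "a (p j) < a (p i)" using Wk[of i] Wk[of j] ij unfolding walkset_def by simp
    show "p i < p j"
    proof (rule ccontr)
      assume "\<not> p i < p j"
      then have "p j < p i \<or> p j = p i" by linarith
      then show False
      proof
        assume "p j < p i" then show False using dec[of "p j" "p i"] pi ij lt by simp
      next
        assume "p j = p i" then show False using lt by simp
      qed
    qed
  qed
  have ge: "i < n \<Longrightarrow> i \<le> p i" for i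
  proof (induction i)
    case 0 then show ?case by simp
  next
    case (Suc i)
    then have "p i < p (Suc i)" using mono[of i "Suc i"] by simp
    moreover have "i \<le> p i" using Suc by simp
    ultimately show ?case by simp
  qed
  show "p = id" by (rule permutes_natset_ge[OF p]) (use ge in auto)
qed

lemma lgv: "det (mat n n (\<lambda>(i,j). int (cnt N (a i) (a j)))) = int (card (NC n N a))"
proof -
  let ?f = "\<lambda>x::(nat \<Rightarrow> nat) \<times> (nat \<Rightarrow> int list). signof (fst x) :: int"
  let ?C = "{x. col n N (snd x)}"
  have "det (mat n n (\<lambda>(i,j). int (cnt N (a i) (a j)))) = sum ?f (LX n N a)" by (rule det_expand)
  also have "\<dots> = sum ?f (LX n N a \<inter> ?C) + sum ?f (LX n N a - ?C)"
    by (rule sum.Int_Diff[OF finite_LX])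
  also have "sum ?f (LX n N a \<inter> ?C) = 0"
  proof (rule sum_invol_zero[where g = "gmap n N"])
    show "finite (LX n N a \<inter> ?C)" using finite_LX by simp
  next
    fix x assume "x \<in> LX n N a \<inter> ?C"
    then have x: "x \<in> LX n N a" and c: "col n N (snd x)" by auto
    show "gmap n N x \<in> LX n N a \<inter> ?C" using g_props[OF x c] by simp
    show "gmap n N (gmap n N x) = x" using g_props[OF x c] by simp
    show "signof (fst (gmap n N x)) = - (signof (fst x) :: int)" using g_props[OF x c] by simp
  qed
  also have "LX n N a - ?C = (\<lambda>W. (id :: nat \<Rightarrow> nat, W)) ` NC n N a"
  proof (intro equalityI subsetI)
    fix x assume x: "x \<in> LX n N a - ?C"
    obtain p W where xpw: "x = (p, W)" by (cases x)
    have "p = id" using nocol_id[of p W] x xpw by simp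
    then show "x \<in> (\<lambda>W. (id :: nat \<Rightarrow> nat, W)) ` NC n N a" using x xpw unfolding LX_def NC_def by auto
  next
    fix x assume "x \<in> (\<lambda>W. (id :: nat \<Rightarrow> nat, W)) ` NC n N a"
    then show "x \<in> LX n N a - ?C" unfolding LX_def NC_def by auto
  qed
  also have "sum ?f ((\<lambda>W. (id :: nat \<Rightarrow> nat, W)) ` NC n N a) = sum (\<lambda>W. 1) (NC n N a)"
    by (subst sum.reindex) (auto simp: inj_on_def)
  finally show ?thesis by simp
qed

end


lemma cat_cnt: "int (catalan K) = int (cnt (2*K) 0 0)"
  unfolding catalan_def using cnt_catalan[of K] by simp

lemma reindex_even:
  fixes f :: "int \<Rightarrow> int"
  assumes n1: "1 \<le> n" and M: "2 * int (n-1) \<le> M"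
    and z: "\<And>c. c \<in> {0..M} \<Longrightarrow> odd c \<or> 2 * int (n-1) < c \<Longrightarrow> f c = 0"
  shows "sum f {0..M} = (\<Sum>k<n. f (2 * int (n-1-k)))"
proof -
  let ?a = "\<lambda>k. 2 * int (n-1-k)"
  have sub: "?a ` {..<n} \<subseteq> {0..M}" using M by auto
  have inj: "inj_on ?a {..<n}" by (auto simp: inj_on_def)
  have "sum f {0..M} = sum f (?a ` {..<n})"
  proof (rule sum.mono_neutral_right)
    show "finite {0..M}" by simp
    show "?a ` {..<n} \<subseteq> {0..M}" by (rule sub)
    show "\<forall>c\<in>{0..M} - ?a ` {..<n}. f c = 0"
    proof
      fix c assume c: "c \<in> {0..M} - ?a ` {..<n}"
      show "f c = 0"
      proof (rule z)
        show "c \<in> {0..M}" using c by simp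
        show "odd c \<or> 2 * int (n-1) < c"
        proof (rule ccontr)
          assume "\<not> (odd c \<or> 2 * int (n-1) < c)"
          then have ev: "even c" and le: "c \<le> 2 * int (n-1)" by auto
          have c0: "0 \<le> c" using c by simp
          define k where "k = n - 1 - nat (c div 2)"
          have "nat (c div 2) \<le> n - 1" using le c0 ev by linarith
          then have "n - 1 - k = nat (c div 2)" unfolding k_def by simp
          then have "?a k = c" using ev c0 by simp
          moreover have "k < n" unfolding k_def using n1 by simp
          ultimately show False using c by auto
        qed
      qed
    qed
  qed
  also have "\<dots> = (\<Sum>k<n. f (?a k))" using sum.reindex[OF inj, of f] by simp
  finally show ?thesis .
qed

lemma CK_int: "a + int s \<le> M \<Longrightarrow> int (cnt (s + t) a b) = (\<Sum>c\<in>{0..M}. int (cnt s a c) * int (cnt t c b))"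
  using cnt_CK[of a s M t b] by simp

lemma cnt_zero_cases: "odd (int t + a + b) \<or> int t < \<bar>b - a\<bar> \<Longrightarrow> cnt t a b = 0"
  using cnt_nz[of t a b] by linarith

lemma entry_eq:
  assumes n1: "1 \<le> n" and i: "i < n" and j: "j < n"
  shows "int (catalan (2*n+m-(i+1)-(j+1))) =
    (\<Sum>l<n. (\<Sum>k<n. int (cnt (2*(n-1-i)) 0 (2*int(n-1-k))) * int (cnt (2*m) (2*int(n-1-k)) (2*int(n-1-l))))
       * int (cnt (2*(n-1-j)) (2*int(n-1-l)) 0))"
proof -
  define p where "p = n-1-i"
  define q where "q = n-1-j"
  define M where "M = 2 * int (n-1)"
  have K: "2*n+m-(i+1)-(j+1) = m + p + q" unfolding p_def q_def using i j by simp
  have pM: "2 * int p \<le> M" unfolding p_def M_def by simp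
  have qM: "2 * int q \<le> M" unfolding q_def M_def by simp
  have "int (catalan (2*n+m-(i+1)-(j+1))) = int (cnt (2*p + (2*m + 2*q)) 0 0)"
    unfolding K cat_cnt by (simp add: algebra_simps)
  also have "\<dots> = (\<Sum>c\<in>{0..M}. int (cnt (2*p) 0 c) * int (cnt (2*m + 2*q) c 0))"
    by (rule CK_int) (use pM in simp)
  also have "\<dots> = (\<Sum>k<n. int (cnt (2*p) 0 (2*int(n-1-k))) * int (cnt (2*m + 2*q) (2*int(n-1-k)) 0))"
  proof (rule reindex_even[OF n1])
    show "2 * int (n - 1) \<le> M" unfolding M_def by simp
    fix c assume "c \<in> {0..M}" "odd c \<or> 2 * int (n - 1) < c"
    then have "odd (int (2*p) + 0 + c) \<or> int (2*p) < \<bar>c - 0\<bar>" using pM unfolding M_def by auto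
    then show "int (cnt (2*p) 0 c) * int (cnt (2*m + 2*q) c 0) = 0" using cnt_zero_cases by simp
  qed
  also have "\<dots> = (\<Sum>k<n. int (cnt (2*p) 0 (2*int(n-1-k))) *
      (\<Sum>l<n. int (cnt (2*m) (2*int(n-1-k)) (2*int(n-1-l))) * int (cnt (2*q) (2*int(n-1-l)) 0)))"
  proof (rule sum.cong[OF refl])
    fix k assume "k \<in> {..<n}"
    define M2 where "M2 = M + 2 * int m"
    have "int (cnt (2*m + 2*q) (2*int(n-1-k)) 0) = (\<Sum>d\<in>{0..M2}. int (cnt (2*m) (2*int(n-1-k)) d) * int (cnt (2*q) d 0))"
      by (rule CK_int) (simp add: M2_def M_def)
    also have "\<dots> = (\<Sum>l<n. int (cnt (2*m) (2*int(n-1-k)) (2*int(n-1-l))) * int (cnt (2*q) (2*int(n-1-l)) 0))"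
    proof (rule reindex_even[OF n1])
      show "2 * int (n - 1) \<le> M2" unfolding M2_def M_def by simp
      fix d assume "d \<in> {0..M2}" "odd d \<or> 2 * int (n - 1) < d"
      then have "odd (int (2*q) + d + 0) \<or> int (2*q) < \<bar>0 - d\<bar>" using qM unfolding M_def M2_def by auto
      then show "int (cnt (2*m) (2*int(n-1-k)) d) * int (cnt (2*q) d 0) = 0" using cnt_zero_cases by simp
    qed
    finally show "int (cnt (2*p) 0 (2*int(n-1-k))) * int (cnt (2*m + 2*q) (2*int(n-1-k)) 0) =
      int (cnt (2*p) 0 (2*int(n-1-k))) *
      (\<Sum>l<n. int (cnt (2*m) (2*int(n-1-k)) (2*int(n-1-l))) * int (cnt (2*q) (2*int(n-1-l)) 0))" by simp
  qed
  also have "\<dots> = (\<Sum>k<n. \<Sum>l<n. int (cnt (2*p) 0 (2*int(n-1-k))) * int (cnt (2*m) (2*int(n-1-k)) (2*int(n-1-l))) * int (cnt (2*q) (2*int(n-1-l)) 0))"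
    by (simp add: sum_distrib_left mult.assoc)
  also have "\<dots> = (\<Sum>l<n. \<Sum>k<n. int (cnt (2*p) 0 (2*int(n-1-k))) * int (cnt (2*m) (2*int(n-1-k)) (2*int(n-1-l))) * int (cnt (2*q) (2*int(n-1-l)) 0))"
    by (rule sum.swap)
  also have "\<dots> = (\<Sum>l<n. (\<Sum>k<n. int (cnt (2*p) 0 (2*int(n-1-k))) * int (cnt (2*m) (2*int(n-1-k)) (2*int(n-1-l))))
       * int (cnt (2*q) (2*int(n-1-l)) 0))"
    by (simp add: sum_distrib_right)
  finally show ?thesis unfolding p_def q_def .
qed

definition Lm :: "nat \<Rightarrow> int mat" where
  "Lm n = mat n n (\<lambda>(i,k). int (cnt (2*(n-1-i)) 0 (2*int(n-1-k))))"
definition Dm :: "nat \<Rightarrow> nat \<Rightarrow> int mat" where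
  "Dm n N = mat n n (\<lambda>(k,l). int (cnt N (2*int(n-1-k)) (2*int(n-1-l))))"
definition Rm :: "nat \<Rightarrow> int mat" where
  "Rm n = mat n n (\<lambda>(l,j). int (cnt (2*(n-1-j)) (2*int(n-1-l)) 0))"

lemma hankel_factor: assumes n1: "1 \<le> n" shows "hankel_cat n m = Lm n * Dm n (2*m) * Rm n"
proof (rule eq_matI)
  fix i j assume i: "i < dim_row (Lm n * Dm n (2*m) * Rm n)" and j: "j < dim_col (Lm n * Dm n (2*m) * Rm n)"
  then have i: "i < n" and j: "j < n" by (simp_all add: Lm_def Rm_def)
  have "(Lm n * Dm n (2*m) * Rm n) $$ (i, j) =
    (\<Sum>l<n. (\<Sum>k<n. int (cnt (2*(n-1-i)) 0 (2*int(n-1-k))) * int (cnt (2*m) (2*int(n-1-k)) (2*int(n-1-l))))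
       * int (cnt (2*(n-1-j)) (2*int(n-1-l)) 0))"
    using i j by (simp add: Lm_def Dm_def Rm_def scalar_prod_def lessThan_atLeast0)
  also have "\<dots> = int (catalan (2*n+m-(i+1)-(j+1)))" using entry_eq[OF n1 i j] by simp
  finally show "hankel_cat n m $$ (i, j) = (Lm n * Dm n (2*m) * Rm n) $$ (i, j)"
    unfolding hankel_cat_def using i j by simp
qed (simp_all add: hankel_cat_def Lm_def Rm_def)

lemma det_Lm: "det (Lm n) = 1"
proof -
  have "det (Lm n) = prod_list (diag_mat (Lm n))"
  proof (rule det_upper_triangular)
    show "upper_triangular (Lm n)"
    proof (rule upper_triangularI)
      fix i k assume "k < i" "i < dim_row (Lm n)"
      then have ik: "k < i" "i < n" by (auto simp: Lm_def)
      have "cnt (2*(n-1-i)) 0 (2*int(n-1-k)) = 0"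
        by (rule cnt_zero_cases) (use ik in auto)
      then show "Lm n $$ (i, k) = 0" using ik unfolding Lm_def by simp
    qed
    show "Lm n \<in> carrier_mat n n" unfolding Lm_def by simp
  qed
  also have "\<dots> = (\<Prod>i = 0..<n. Lm n $$ (i,i))" by (simp add: prod_list_diag_prod Lm_def)
  also have "\<dots> = (\<Prod>i = 0..<n. 1)"
  proof (rule prod.cong[OF refl])
    fix i assume "i \<in> {0..<n}"
    then have "i < n" by simp
    moreover have "cnt (2*(n-1-i)) 0 (0 + int (2*(n-1-i))) = 1" by (rule cnt_up) simp
    ultimately show "Lm n $$ (i,i) = 1" unfolding Lm_def by simp
  qed
  finally show ?thesis by simp
qed

lemma det_Rm: "det (Rm n) = 1"
proof -
  have "det (Rm n) = prod_list (diag_mat (Rm n))"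
  proof (rule det_lower_triangular)
    fix l j assume lj: "l < j" "j < n"
    have "cnt (2*(n-1-j)) (2*int(n-1-l)) 0 = 0"
      by (rule cnt_zero_cases) (use lj in auto)
    then show "Rm n $$ (l, j) = 0" using lj unfolding Rm_def by simp
  next
    show "Rm n \<in> carrier_mat n n" unfolding Rm_def by simp
  qed
  also have "\<dots> = (\<Prod>i = 0..<n. Rm n $$ (i,i))" by (simp add: prod_list_diag_prod Rm_def)
  also have "\<dots> = (\<Prod>i = 0..<n. 1)"
  proof (rule prod.cong[OF refl])
    fix i assume "i \<in> {0..<n}"
    then have "i < n" by simp
    moreover have "cnt (2*(n-1-i)) (0 + int (2*(n-1-i))) 0 = 1" by (rule cnt_down) simp
    ultimately show "Rm n $$ (i,i) = 1" unfolding Rm_def by simp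
  qed
  finally show ?thesis by simp
qed

lemma det_hankel: assumes n1: "1 \<le> n" shows "det (hankel_cat n m) = det (Dm n (2*m))"
proof -
  have c: "Lm n \<in> carrier_mat n n" "Dm n (2*m) \<in> carrier_mat n n" "Rm n \<in> carrier_mat n n"
    unfolding Lm_def Dm_def Rm_def by auto
  have "det (hankel_cat n m) = det (Lm n * Dm n (2*m) * Rm n)" using hankel_factor[OF n1] by simp
  also have "\<dots> = det (Lm n * Dm n (2*m)) * det (Rm n)"
    by (rule det_mult[OF mult_carrier_mat[OF c(1,2)] c(3)])
  also have "\<dots> = det (Lm n) * det (Dm n (2*m)) * det (Rm n)"
    using det_mult[OF c(1,2)] by simp
  finally show ?thesis using det_Lm det_Rm by simp
qed


lemma tens_wt2_snoc: "tens_wt2 (xs @ [b]) k = tens_wt2 xs k + spin_wt2 b k"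
  unfolding tens_wt2_def by simp

lemma Xw_0: "Xw bs 0 k = 0" unfolding Xw_def tens_wt2_def by simp

lemma Xw_Suc: "t < length bs \<Longrightarrow> Xw bs (Suc t) k = Xw bs t k + spin_wt2 (bs!t) k"
  unfolding Xw_def by (simp add: take_Suc_conv_app_nth tens_wt2_snoc)

definition fwd :: "nat \<Rightarrow> nat \<Rightarrow> bool list list \<Rightarrow> (nat \<Rightarrow> int list)" where
  "fwd n N bs = (\<lambda>i\<in>{0..<n}. map (\<lambda>t. 2 * int (n-1-i) + Xw bs t i) [0..<Suc N])"

definition bwd :: "nat \<Rightarrow> nat \<Rightarrow> (nat \<Rightarrow> int list) \<Rightarrow> bool list list" where
  "bwd n N W = map (\<lambda>t. map (\<lambda>i. W i ! t < W i ! Suc t) [0..<n]) [0..<N]"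

lemma dom_chain:
  fixes X :: "nat \<Rightarrow> int"
  assumes "\<forall>j. Suc j < n \<longrightarrow> X (Suc j) \<le> X j"
  shows "i \<le> j \<Longrightarrow> j < n \<Longrightarrow> X j \<le> X i"
proof (induction j)
  case 0 then show ?case by simp
next
  case (Suc j)
  then show ?case
  proof (cases "i = Suc j")
    case False
    then have "i \<le> j" using Suc by simp
    then show ?thesis using Suc assms by force
  qed simp
qed

lemma fwd_NC: assumes bs: "bs \<in> good n N" shows "fwd n N bs \<in> NC n N (\<lambda>k. 2 * int (n-1-k))"
proof -
  have tp: "bs \<in> tensor_power n N" and w: "\<forall>k<n. Xw bs N k = 0"
    and D1: "\<forall>t\<le>N. \<forall>j. Suc j < n \<longrightarrow> Xw bs t (Suc j) \<le> Xw bs t j"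
    and D2: "\<forall>t\<le>N. 0 \<le> Xw bs t (n-1)" using bs unfolding good_def by auto
  have len: "length bs = N" using tp unfolding tensor_power_def by simp
  have ch: "Xw bs t j \<le> Xw bs t i" if "t \<le> N" "i \<le> j" "j < n" for t i j
    using dom_chain[of n "\<lambda>k. Xw bs t k" i j] D1 that by blast
  let ?W = "fwd n N bs"
  have Wi: "?W i = map (\<lambda>t. 2 * int (n-1-i) + Xw bs t i) [0..<Suc N]" if "i < n" for i
    unfolding fwd_def using that by simp
  have Wit: "?W i ! t = 2 * int (n-1-i) + Xw bs t i" if "i < n" "t \<le> N" for i t
    using Wi[OF that(1)] that(2) by (simp del: upt_Suc)
  have walk: "?W i \<in> walkset N (2 * int (n-1-i)) (2 * int (n-1-i))" if i: "i < n" for i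
    unfolding walkset_def
  proof (intro CollectI conjI allI impI)
    show "length (?W i) = Suc N" using Wi[OF i] by simp
    show "?W i ! 0 = 2 * int (n-1-i)" using Wit[OF i, of 0] by (simp add: Xw_0)
    show "?W i ! N = 2 * int (n-1-i)" using Wit[OF i, of N] w i by simp
  next
    fix t assume t: "t \<le> N"
    have "Xw bs t (n-1) \<le> Xw bs t i" using ch[OF t, of i "n-1"] i by simp
    then show "0 \<le> ?W i ! t" using Wit[OF i t] D2 t by force
  next
    fix t assume t: "t < N"
    have "Xw bs (Suc t) i = Xw bs t i + spin_wt2 (bs!t) i" using Xw_Suc[of t bs i] len t by simp
    moreover have "\<bar>spin_wt2 (bs!t) i\<bar> = 1" unfolding spin_wt2_def by simp
    ultimately show "\<bar>?W i ! Suc t - ?W i ! t\<bar> = 1" using Wit[OF i, of t] Wit[OF i, of "Suc t"] t by simp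
  qed
  have nc: "\<not> col n N ?W"
  proof
    assume "col n N ?W"
    then obtain t i j where tij: "t \<le> N" "i < j" "j < n" "?W i ! t = ?W j ! t" unfolding col_def by blast
    have "Xw bs t j \<le> Xw bs t i" using ch[of t i j] tij by simp
    moreover have "2 * int (n-1-j) < 2 * int (n-1-i)" using tij by simp
    ultimately show False using tij Wit[of i t] Wit[of j t] by simp
  qed
  have "?W \<in> PiE {0..<n} (\<lambda>i. walkset N (2 * int (n-1-i)) (2 * int (n-1-i)))"
    using walk unfolding fwd_def by (auto simp: PiE_iff)
  then show ?thesis using nc unfolding NC_def by simp
qed

lemma par2: fixes x y A B T :: int assumes "even (x - A - T)" "even (y - B - T)" shows "even ((x - A) - (y - B))"
proof -
  have "(x - A) - (y - B) = (x - A - T) - (y - B - T)" by simp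
  then show ?thesis using assms by simp
qed

lemma par_le: fixes u v A B :: int assumes "even ((u - A) - (v - B))" "v < u" "A - B = 2" shows "v - B \<le> u - A"
proof -
  from assms(1) obtain k where k: "(u - A) - (v - B) = 2 * k" by (rule evenE)
  have "(u - A) - (v - B) > -2" using assms(2,3) by simp
  then have "k \<ge> 0" using k by simp
  then show ?thesis using k by simp
qed

lemma NC_walk: "W \<in> NC n N a \<Longrightarrow> i < n \<Longrightarrow> W i \<in> walkset N (a i) (a i)"
  unfolding NC_def by (auto intro: PiE_mem)

lemma bwd_X: assumes W: "W \<in> NC n N (\<lambda>k. 2 * int (n-1-k))" and i: "i < n"
  shows "t \<le> N \<Longrightarrow> Xw (bwd n N W) t i = W i ! t - 2 * int (n-1-i)"
proof (induction t)
  case 0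
  have "W i \<in> walkset N (2 * int (n-1-i)) (2 * int (n-1-i))" using NC_walk[OF W i] by simp
  then show ?case unfolding walkset_def by (simp add: Xw_0)
next
  case (Suc t)
  have Wi: "W i \<in> walkset N (2 * int (n-1-i)) (2 * int (n-1-i))" using NC_walk[OF W i] by simp
  have t: "t < N" using Suc by simp
  have st: "\<bar>W i ! Suc t - W i ! t\<bar> = 1" using Wi t unfolding walkset_def by auto
  have "Xw (bwd n N W) (Suc t) i = Xw (bwd n N W) t i + spin_wt2 (bwd n N W ! t) i"
    by (rule Xw_Suc) (simp add: bwd_def t)
  also have "spin_wt2 (bwd n N W ! t) i = (if W i ! t < W i ! Suc t then 1 else -1)"
    unfolding bwd_def spin_wt2_def using t i by simp
  finally show ?case using Suc st by auto
qed

lemma bwd_good: assumes W: "W \<in> NC n N (\<lambda>k. 2 * int (n-1-k))" and n1: "1 \<le> n"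
  shows "bwd n N W \<in> good n N"
proof -
  let ?a = "\<lambda>k. 2 * int (n-1-k)"
  let ?bs = "bwd n N W"
  have Wk: "W k \<in> walkset N (?a k) (?a k)" if "k < n" for k using NC_walk[OF W that] by simp
  have nc: "\<not> col n N W" using W unfolding NC_def by simp
  have X: "Xw ?bs t i = W i ! t - ?a i" if "i < n" "t \<le> N" for i t using bwd_X[OF W that] .
  have tp: "?bs \<in> tensor_power n N" unfolding tensor_power_def spin_elems_def bwd_def by auto
  have w: "\<forall>k<n. Xw ?bs N k = 0" using X Wk unfolding walkset_def by simp
  have D1: "\<forall>t\<le>N. \<forall>j. Suc j < n \<longrightarrow> Xw ?bs t (Suc j) \<le> Xw ?bs t j"
  proof (intro allI impI)
    fix t j assume t: "t \<le> N" and j: "Suc j < n"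
    have ncj: "\<forall>s\<le>N. W j ! s \<noteq> W (Suc j) ! s" using nc j unfolding col_def by (metis lessI)
    have lt: "?a (Suc j) < ?a j" using j by simp
    have e: "even (?a j - ?a (Suc j))" by simp
    have o: "W (Suc j) ! t < W j ! t"
      using order_keep[OF Wk[of j] Wk[of "Suc j"] e lt ncj t] j by simp
    have p1: "even (W j ! t - ?a j - int t)" using walk_parity[OF Wk[of j] t] j by simp
    have p2: "even (W (Suc j) ! t - ?a (Suc j) - int t)" using walk_parity[OF Wk[of "Suc j"] t] j by simp
    have d: "?a j - ?a (Suc j) = 2" using j by simp
    have "even ((W j ! t - ?a j) - (W (Suc j) ! t - ?a (Suc j)))" by (rule par2[OF p1 p2])
    then have "W (Suc j) ! t - ?a (Suc j) \<le> W j ! t - ?a j" using o d by (rule par_le)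
    then show "Xw ?bs t (Suc j) \<le> Xw ?bs t j" using X[of j t] X[of "Suc j" t] j t by simp
  qed
  have D2: "\<forall>t\<le>N. 0 \<le> Xw ?bs t (n-1)"
  proof (intro allI impI)
    fix t assume t: "t \<le> N"
    have "0 \<le> W (n-1) ! t" using Wk[of "n-1"] n1 t unfolding walkset_def by auto
    then show "0 \<le> Xw ?bs t (n-1)" using X[of "n-1" t] n1 t by simp
  qed
  show ?thesis unfolding good_def using tp w D1 D2 by blast
qed

lemma fwd_bwd: assumes W: "W \<in> NC n N (\<lambda>k. 2 * int (n-1-k))"
  shows "fwd n N (bwd n N W) = W"
proof (rule ext)
  fix i
  show "fwd n N (bwd n N W) i = W i"
  proof (cases "i < n")
    case True
    have Wi: "W i \<in> walkset N (2 * int (n-1-i)) (2 * int (n-1-i))" using NC_walk[OF W True] by simp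
    then have len: "length (W i) = Suc N" unfolding walkset_def by simp
    show ?thesis unfolding fwd_def using True
      by (intro nth_equalityI) (auto simp: len bwd_X[OF W True] simp del: upt_Suc)
  next
    case False
    then show ?thesis using W unfolding fwd_def NC_def by (auto simp: PiE_def extensional_def)
  qed
qed

lemma bwd_fwd: assumes bs: "bs \<in> good n N"
  shows "bwd n N (fwd n N bs) = bs"
proof -
  have tp: "bs \<in> tensor_power n N" using bs unfolding good_def by auto
  have len: "length bs = N" using tp unfolding tensor_power_def by simp
  have lenb: "length (bs!t) = n" if "t < N" for t using tp that len unfolding tensor_power_def spin_elems_def by auto
  have F: "fwd n N bs i ! t = 2 * int (n-1-i) + Xw bs t i" if "i < n" "t \<le> N" for i t
    unfolding fwd_def using that by (simp del: upt_Suc)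
  show ?thesis
  proof (rule nth_equalityI)
    show "length (bwd n N (fwd n N bs)) = length bs" unfolding bwd_def using len by simp
    fix t assume t: "t < length (bwd n N (fwd n N bs))"
    then have tN: "t < N" unfolding bwd_def by simp
    show "bwd n N (fwd n N bs) ! t = bs ! t"
    proof (rule nth_equalityI)
      show "length (bwd n N (fwd n N bs) ! t) = length (bs ! t)" unfolding bwd_def using tN lenb by simp
      fix i assume i: "i < length (bwd n N (fwd n N bs) ! t)"
      then have iN: "i < n" unfolding bwd_def using tN by simp
      have "Xw bs (Suc t) i = Xw bs t i + spin_wt2 (bs!t) i" using Xw_Suc[of t bs i] len tN by simp
      then have "(Xw bs t i < Xw bs (Suc t) i) = (bs!t!i)" unfolding spin_wt2_def by simp
      then show "bwd n N (fwd n N bs) ! t ! i = bs ! t ! i"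
        unfolding bwd_def using tN iN F[OF iN, of t] F[OF iN, of "Suc t"] by simp
    qed
  qed
qed

lemma card_good: assumes n1: "1 \<le> n" shows "card (good n N) = card (NC n N (\<lambda>k. 2 * int (n-1-k)))"
proof (rule bij_betw_same_card)
  show "bij_betw (fwd n N) (good n N) (NC n N (\<lambda>k. 2 * int (n-1-k)))"
  proof (rule bij_betw_byWitness[where f' = "bwd n N"])
    show "\<forall>a\<in>good n N. bwd n N (fwd n N a) = a" using bwd_fwd by blast
    show "\<forall>a'\<in>NC n N (\<lambda>k. 2 * int (n-1-k)). fwd n N (bwd n N a') = a'" using fwd_bwd by blast
    show "fwd n N ` good n N \<subseteq> NC n N (\<lambda>k. 2 * int (n-1-k))" using fwd_NC by blast
    show "bwd n N ` NC n N (\<lambda>k. 2 * int (n-1-k)) \<subseteq> good n N" using bwd_good[OF _ n1] by blast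
  qed
qed


theorem theorem4p1:
  fixes n m :: nat
  assumes "n \<ge> 1" and "m \<ge> 1"
  shows "int (card (trivial_components n (2 * m))) = det (hankel_cat n m)"
proof -
  let ?a = "\<lambda>k. 2 * int (n-1-k)"
  have dec: "\<And>i j. i < j \<Longrightarrow> j < n \<Longrightarrow> ?a j < ?a i" by simp
  have ev: "\<And>i. i < n \<Longrightarrow> even (?a i)" by simp
  have "int (card (trivial_components n (2 * m))) = int (card (good n (2*m)))"
    using triv_good[OF assms(1)] by simp
  also have "\<dots> = int (card (NC n (2*m) ?a))" using card_good[OF assms(1)] by simp
  also have "\<dots> = det (mat n n (\<lambda>(i,j). int (cnt (2*m) (?a i) (?a j))))"
    using lgv[OF dec ev] by simp
  also have "\<dots> = det (Dm n (2*m))" unfolding Dm_def by simp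
  also have "\<dots> = det (hankel_cat n m)" using det_hankel[OF assms(1)] by simp
  finally show ?thesis .
qed

end
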